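(* Let $g_1,\dots,g_N\in\mathbb{C}^K$ be nonzero, $w_1,\dots,w_N\ge0$, and let $\mathrm{WFP}$ and $\mathrm{WFC}$ be as defined in the context. Let $\mathcal{N}$ be partitioned into disjoint sets $\mathcal{S}_1,\dots,\mathcal{S}_L$ and fix integers $0\le r_i\le|\mathcal{S}_i|$, not all zero. Let $\mathcal{R}^\ast$ be the output of the JGS algorithm run with cost $\mathcal{C}=\mathrm{WFC}$ and cardinality requirements $|\mathcal{R}\cap\mathcal{S}_i|=r_i$, and set $\mathcal{T}^\ast=\mathcal{N}\setminus\mathcal{R}^\ast$. Let $\mathcal{T}_{OPT}$ minimize $\mathrm{WFP}(\mathcal{T})$ over all $\mathcal{T}\subseteq\mathcal{N}$ with $|\mathcal{T}\cap\mathcal{S}_i|=|\mathcal{S}_i|-r_i$ for all $i$, and suppose $\mathrm{WFP}(\mathcal{T}_{OPT})>0$. Then $$\mathrm{WFP}(\mathcal{T}^\ast)\le\frac12\Big(1+\frac{\mathrm{WFP}(\mathcal{N})}{\mathrm{WFP}(\mathcal{T}_{OPT})}\Big)\mathrm{WFP}(\mathcal{T}_{OPT}).$$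
   Context: $\mathrm{WFP}(\mathcal{S})=\sum_{i,j\in\mathcal{S}}w_iw_j\frac{|\langle g_i,g_j\rangle|^2}{\|g_i\|_2^2\|g_j\|_2^2}$ (weighted frame potential) and $\mathrm{WFC}(\mathcal{T})=\mathrm{WFP}(\mathcal{N})-\mathrm{WFP}(\mathcal{N}\setminus\mathcal{T})$ (weighted frame cost). The JGS algorithm for cost $\mathcal{C}$ and requirements $r_i$: start with $\mathcal{R}=\varnothing$; for $\sum_i r_i$ iterations, form $\mathcal{R}^c=\bigcup_{i:\,|\mathcal{R}\cap\mathcal{S}_i|<r_i}(\mathcal{S}_i\setminus\mathcal{R})$, choose $t^\ast\in\arg\max_{t\in\mathcal{R}^c}\mathcal{C}(\mathcal{R}\cup\{t\})$, and set $\mathcal{R}\leftarrow\mathcal{R}\cup\{t^\ast\}$; output the final $\mathcal{R}$. (In the paper's use, $\mathcal{T}^\ast$ is the set of sensors actually kept.) *)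

theory Defs
  imports "HOL-Analysis.Analysis"
begin

definition cinner :: "complex^'k \<Rightarrow> complex^'k \<Rightarrow> complex" where
  "cinner x y = (\<Sum>k\<in>UNIV. x $ k * cnj (y $ k))"

definition WFP :: "(nat \<Rightarrow> complex^'k) \<Rightarrow> (nat \<Rightarrow> real) \<Rightarrow> nat set \<Rightarrow> real" where
  "WFP g w S = (\<Sum>i\<in>S. \<Sum>j\<in>S. w i * w j * (cmod (cinner (g i) (g j)))\<^sup>2
                     / ((norm (g i))\<^sup>2 * (norm (g j))\<^sup>2))"

definition WFC :: "(nat \<Rightarrow> complex^'k) \<Rightarrow> (nat \<Rightarrow> real) \<Rightarrow> nat set \<Rightarrow> nat set \<Rightarrow> real" where
  "WFC g w N T = WFP g w N - WFP g w (N - T)"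

definition jgs_cand :: "(nat \<Rightarrow> nat set) \<Rightarrow> nat \<Rightarrow> (nat \<Rightarrow> nat) \<Rightarrow> nat set \<Rightarrow> nat set" where
  "jgs_cand S L r R = (\<Union>i\<in>{i\<in>{1..L}. card (R \<inter> S i) < r i}. S i - R)"

text \<open>A run of the JGS algorithm: the list of elements chosen in order
  (ties in the argmax may be broken arbitrarily).\<close>
definition jgs_run :: "(nat set \<Rightarrow> real) \<Rightarrow> (nat \<Rightarrow> nat set) \<Rightarrow> nat \<Rightarrow> (nat \<Rightarrow> nat) \<Rightarrow> nat list \<Rightarrow> bool" where
  "jgs_run C S L r xs \<longleftrightarrow>
     length xs = (\<Sum>i\<in>{1..L}. r i) \<and>
     (\<forall>k < length xs.
        xs ! k \<in> jgs_cand S L r (set (take k xs)) \<and>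
        (\<forall>t \<in> jgs_cand S L r (set (take k xs)).
            C (insert t (set (take k xs))) \<le> C (insert (xs ! k) (set (take k xs)))))"

end

theory Submission
  imports Defs
begin

definition coef :: "(nat \<Rightarrow> complex^'k) \<Rightarrow> (nat \<Rightarrow> real) \<Rightarrow> nat \<Rightarrow> nat \<Rightarrow> real" where
  "coef g w i j = w i * w j * (cmod (cinner (g i) (g j)))\<^sup>2 / ((norm (g i))\<^sup>2 * (norm (g j))\<^sup>2)"

lemma WFP_pairs: "WFP g w X = (\<Sum>p\<in>X\<times>X. coef g w (fst p) (snd p))"
  unfolding WFP_def coef_def by (simp add: sum.cartesian_product case_prod_beta)

lemma coef_nn: "w i \<ge> 0 \<Longrightarrow> w j \<ge> 0 \<Longrightarrow> coef g w i j \<ge> 0"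
  unfolding coef_def by (intro divide_nonneg_nonneg mult_nonneg_nonneg) auto

lemma WFP_mono:
  assumes "X \<subseteq> Y" "Y \<subseteq> {0..<n}" "\<And>i. i < n \<Longrightarrow> w i \<ge> 0"
  shows "WFP g w X \<le> WFP g w Y"
proof -
  have fY: "finite Y" using finite_subset[OF assms(2)] by simp
  have nn: "coef g w (fst p) (snd p) \<ge> 0" if "p \<in> Y \<times> Y" for p
  proof -
    have "fst p < n" "snd p < n" using that assms(2) by (auto simp: mem_Times_iff)
    then show ?thesis by (intro coef_nn assms(3))
  qed
  show ?thesis unfolding WFP_pairs
  proof (rule sum_mono2)
    show "finite (Y \<times> Y)" using fY by simp
    show "X \<times> X \<subseteq> Y \<times> Y" using assms(1) by blast
    show "\<And>b. b \<in> Y \<times> Y - X \<times> X \<Longrightarrow> 0 \<le> coef g w (fst b) (snd b)"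
      using nn by blast
  qed
qed

lemma WFP_marg:
  assumes "Y \<subseteq> X" "X \<subseteq> {0..<n}" "\<And>i. i < n \<Longrightarrow> w i \<ge> 0"
  shows "WFP g w Y - WFP g w (Y - {t}) \<le> WFP g w X - WFP g w (X - {t})"
proof -
  have fX: "finite X" using finite_subset[OF assms(2)] by simp
  have fY: "finite Y" using finite_subset[OF assms(1) fX] .
  let ?f = "\<lambda>p. coef g w (fst p) (snd p)"
  have e: "WFP g w Z - WFP g w (Z - {t}) = sum ?f (Z\<times>Z - (Z-{t})\<times>(Z-{t}))" if "finite Z" for Z
    unfolding WFP_pairs using that by (subst sum_diff) auto
  have nn: "coef g w (fst p) (snd p) \<ge> 0" if "p \<in> X \<times> X" for p
  proof -
    have "fst p < n" "snd p < n" using that assms(2) by (auto simp: mem_Times_iff)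
    then show ?thesis by (intro coef_nn assms(3))
  qed
  show ?thesis unfolding e[OF fX] e[OF fY]
  proof (rule sum_mono2)
    show "finite (X \<times> X - (X - {t}) \<times> (X - {t}))" using fX by simp
    show "Y \<times> Y - (Y - {t}) \<times> (Y - {t}) \<subseteq> X \<times> X - (X - {t}) \<times> (X - {t})"
      using assms(1) by blast
    show "\<And>b. b \<in> X \<times> X - (X - {t}) \<times> (X - {t}) - (Y \<times> Y - (Y - {t}) \<times> (Y - {t})) \<Longrightarrow> 0 \<le> coef g w (fst b) (snd b)"
      using nn by blast
  qed
qed

lemma submod_sum:
  fixes G :: "nat set \<Rightarrow> real"
  assumes submod: "\<And>A B t. A \<subseteq> B \<Longrightarrow> G (insert t B) - G B \<le> G (insert t A) - G A"
    and "finite Ob"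
  shows "G (R \<union> Ob) \<le> G R + (\<Sum>y\<in>Ob. G (insert y R) - G R)"
  using \<open>finite Ob\<close>
proof (induction Ob rule: finite_induct)
  case empty then show ?case by simp
next
  case (insert x F)
  have "G (R \<union> insert x F) = G (insert x (R \<union> F))" by simp
  also have "\<dots> \<le> G (R \<union> F) + (G (insert x R) - G R)"
    using submod[of R "R \<union> F" x] by auto
  finally show ?case using insert by simp
qed

lemma greedy:
  fixes G :: "nat set \<Rightarrow> real"
  assumes mono: "\<And>A B. A \<subseteq> B \<Longrightarrow> G A \<le> G B"
    and submod: "\<And>A B t. A \<subseteq> B \<Longrightarrow> G (insert t B) - G B \<le> G (insert t A) - G A"
    and G0: "G {} = 0"
    and fin: "finite N"
    and S_disj: "\<And>i j. i \<in> {1..L} \<Longrightarrow> j \<in> {1..L} \<Longrightarrow> i \<noteq> j \<Longrightarrow> S i \<inter> S j = {}"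
    and S_cover: "(\<Union>i\<in>{1..L}. S i) = N"
    and run: "jgs_run G S L r xs"
    and Ropt_sub: "Ropt \<subseteq> N"
    and Ropt_card: "\<And>i. i \<in> {1..L} \<Longrightarrow> card (Ropt \<inter> S i) = r i"
  shows "G Ropt \<le> 2 * G (set xs)"
proof -
  define m where "m = length xs"
  define R where "R k = set (take k xs)" for k
  define D where "D k = G (insert (xs!k) (R k)) - G (R k)" for k
  have cand: "\<And>k. k < m \<Longrightarrow> xs!k \<in> jgs_cand S L r (R k)"
    and best: "\<And>k t. k < m \<Longrightarrow> t \<in> jgs_cand S L r (R k) \<Longrightarrow>
       G (insert t (R k)) \<le> G (insert (xs!k) (R k))"
    and len: "m = (\<Sum>i\<in>{1..L}. r i)"
    using run unfolding jgs_run_def m_def R_def by auto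
  have blk: "\<exists>b\<in>{1..L}. card (R k \<inter> S b) < r b \<and> xs!k \<in> S b \<and> xs!k \<notin> R k" if "k < m" for k
    using cand[OF that] unfolding jgs_cand_def by auto
  have SN: "S i \<subseteq> N" if "i \<in> {1..L}" for i using S_cover that by blast
  have finS: "finite (S i)" if "i \<in> {1..L}" for i using finite_subset[OF SN[OF that] fin] .
  have Rsuc: "R (Suc k) = insert (xs!k) (R k)" if "k < m" for k
    unfolding R_def using that by (simp add: take_Suc_conv_app_nth m_def)
  have finR: "finite (R k)" for k unfolding R_def by simp
  have neq: "xs!i \<noteq> xs!j" if "i < j" "j < m" for i j
  proof -
    have "xs!i \<in> R j" unfolding R_def using that
      by (auto simp: in_set_conv_nth m_def intro!: exI[of _ i])
    then show ?thesis using blk[OF that(2)] by auto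
  qed
  have dist: "distinct xs"
    unfolding distinct_conv_nth using neq m_def by (metis linorder_neqE)
  have xsN: "xs!k \<in> N" if "k < m" for k using blk[OF that] SN by blast
  have setN: "set xs \<subseteq> N" using xsN by (auto simp: in_set_conv_nth m_def)
  have inv: "k \<le> m \<Longrightarrow> \<forall>i\<in>{1..L}. card (R k \<inter> S i) \<le> r i" for k
  proof (induction k)
    case 0 then show ?case by (simp add: R_def)
  next
    case (Suc k)
    then have km: "k < m" by simp
    obtain b where b: "b \<in> {1..L}" "card (R k \<inter> S b) < r b" "xs!k \<in> S b" "xs!k \<notin> R k"
      using blk[OF km] by blast
    show ?case
    proof
      fix i assume i: "i \<in> {1..L}"
      show "card (R (Suc k) \<inter> S i) \<le> r i"
      proof (cases "i = b")
        case True
        have "R (Suc k) \<inter> S i = insert (xs!k) (R k \<inter> S i)" using Rsuc[OF km] b True by auto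
        then show ?thesis using b True finR by (simp add: card_insert_if)
      next
        case False
        then have "xs!k \<notin> S i" using S_disj[OF i b(1)] b by auto
        then have "R (Suc k) \<inter> S i = R k \<inter> S i" using Rsuc[OF km] by auto
        then show ?thesis using Suc i by simp
      qed
    qed
  qed
  have Rm: "R m = set xs" unfolding R_def m_def by simp
  have R0: "R 0 = {}" unfolding R_def by simp
  have le: "card (set xs \<inter> S i) \<le> r i" if "i \<in> {1..L}" for i using inv[of m] Rm that by auto
  have "card (set xs) = m" using dist distinct_card m_def by blast
  moreover have "set xs = (\<Union>i\<in>{1..L}. set xs \<inter> S i)" using setN S_cover by auto
  ultimately have "m = card (\<Union>i\<in>{1..L}. set xs \<inter> S i)" by simp
  also have "\<dots> = (\<Sum>i\<in>{1..L}. card (set xs \<inter> S i))"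
  proof (rule card_UN_disjoint)
    show "finite {1..L}" by simp
    show "\<forall>i\<in>{1..L}. finite (set xs \<inter> S i)" by simp
    show "\<forall>i\<in>{1..L}. \<forall>j\<in>{1..L}. i \<noteq> j \<longrightarrow> set xs \<inter> S i \<inter> (set xs \<inter> S j) = {}"
    proof (intro ballI impI)
      fix i j assume "i \<in> {1..L}" "j \<in> {1..L}" "i \<noteq> j"
      from S_disj[OF this] show "set xs \<inter> S i \<inter> (set xs \<inter> S j) = {}" by blast
    qed
  qed
  finally have sumeq: "(\<Sum>i\<in>{1..L}. card (set xs \<inter> S i)) = (\<Sum>i\<in>{1..L}. r i)" using len by simp
  have cnt: "card (set xs \<inter> S i) = r i" if i: "i \<in> {1..L}" for i
  proof (rule ccontr)
    assume "card (set xs \<inter> S i) \<noteq> r i"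
    then have "card (set xs \<inter> S i) < r i" using le[OF i] by simp
    then have "(\<Sum>i\<in>{1..L}. card (set xs \<inter> S i)) < (\<Sum>i\<in>{1..L}. r i)"
      using le i by (intro sum_strict_mono_ex1) auto
    then show False using sumeq by simp
  qed
  define K where "K i = {k\<in>{..<m}. xs!k \<in> S i}" for i
  have cardK: "card (K i) = r i" if i: "i \<in> {1..L}" for i
  proof -
    have "inj_on (\<lambda>k. xs!k) (K i)" unfolding K_def inj_on_def
      using dist by (auto simp: nth_eq_iff_index_eq m_def)
    moreover have "(\<lambda>k. xs!k) ` K i = set xs \<inter> S i"
      unfolding K_def by (auto simp: in_set_conv_nth m_def)
    ultimately show ?thesis using card_image cnt[OF i] by metis
  qed
  have Dnn: "D k \<ge> 0" for k unfolding D_def using mono[of "R k" "insert (xs!k) (R k)"] by auto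
  have "G (R m) - G (R 0) = (\<Sum>k<m. G (R (Suc k)) - G (R k))"
    by (rule sum_lessThan_telescope[symmetric])
  also have "\<dots> = (\<Sum>k<m. D k)" unfolding D_def by (rule sum.cong) (auto simp: Rsuc)
  finally have tele: "G (set xs) = (\<Sum>k<m. D k)" using Rm R0 G0 by simp
  have Keq: "{..<m} = (\<Union>i\<in>{1..L}. K i)"
  proof
    show "{..<m} \<subseteq> (\<Union>i\<in>{1..L}. K i)"
    proof
      fix k assume k: "k \<in> {..<m}"
      then have "xs!k \<in> (\<Union>i\<in>{1..L}. S i)" using xsN S_cover by simp
      then obtain i where "i \<in> {1..L}" "xs!k \<in> S i" by blast
      then show "k \<in> (\<Union>i\<in>{1..L}. K i)" unfolding K_def using k by blast
    qed
    show "(\<Union>i\<in>{1..L}. K i) \<subseteq> {..<m}" unfolding K_def by blast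
  qed
  have Kdisj: "K i \<inter> K j = {}" if "i \<in> {1..L}" "j \<in> {1..L}" "i \<noteq> j" for i j
    using S_disj[OF that] unfolding K_def by blast
  have part1: "(\<Sum>k<m. D k) = (\<Sum>i\<in>{1..L}. \<Sum>k\<in>K i. D k)"
  proof -
    have a: "\<forall>i\<in>{1..L}. finite (K i)" unfolding K_def by simp
    have b: "\<forall>i\<in>{1..L}. \<forall>j\<in>{1..L}. i \<noteq> j \<longrightarrow> K i \<inter> K j = {}"
      using Kdisj by blast
    show ?thesis unfolding Keq by (rule sum.UNION_disjoint[OF finite_atLeastAtMost a b])
  qed
  define E where "E y = G (insert y (set xs)) - G (set xs)" for y
  define Ob where "Ob i = (Ropt \<inter> S i) - set xs" for i
  have Oeq: "Ropt - set xs = (\<Union>i\<in>{1..L}. Ob i)" unfolding Ob_def using Ropt_sub S_cover by blast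
  have Odisj: "Ob i \<inter> Ob j = {}" if "i \<in> {1..L}" "j \<in> {1..L}" "i \<noteq> j" for i j
    using S_disj[OF that] unfolding Ob_def by blast
  have part2: "(\<Sum>y\<in>Ropt - set xs. E y) = (\<Sum>i\<in>{1..L}. \<Sum>y\<in>Ob i. E y)"
  proof -
    have a: "\<forall>i\<in>{1..L}. finite (Ob i)" unfolding Ob_def using finS by blast
    have b: "\<forall>i\<in>{1..L}. \<forall>j\<in>{1..L}. i \<noteq> j \<longrightarrow> Ob i \<inter> Ob j = {}"
      using Odisj by blast
    show ?thesis unfolding Oeq by (rule sum.UNION_disjoint[OF finite_atLeastAtMost a b])
  qed
  have key: "E y \<le> D k" if i: "i \<in> {1..L}" and y: "y \<in> Ob i" and k: "k \<in> K i" for i y k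
  proof -
    have km: "k < m" and xk: "xs!k \<in> S i" using k unfolding K_def by auto
    obtain b where b: "b \<in> {1..L}" "card (R k \<inter> S b) < r b" "xs!k \<in> S b"
      using blk[OF km] by blast
    have "b = i" using S_disj[OF b(1) i] b xk by auto
    have Rsub: "R k \<subseteq> set xs" unfolding R_def by (rule set_take_subset)
    have "y \<in> jgs_cand S L r (R k)" unfolding jgs_cand_def
      using y Rsub b \<open>b = i\<close> i unfolding Ob_def by auto
    from best[OF km this] have "G (insert y (R k)) \<le> G (insert (xs!k) (R k))" .
    moreover have "E y \<le> G (insert y (R k)) - G (R k)" unfolding E_def by (rule submod[OF Rsub])
    ultimately show ?thesis unfolding D_def by simp
  qed
  have blockle: "(\<Sum>y\<in>Ob i. E y) \<le> (\<Sum>k\<in>K i. D k)" if i: "i \<in> {1..L}" for i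
  proof (cases "Ob i = {}")
    case True then show ?thesis using Dnn by (simp add: sum_nonneg)
  next
    case False
    have finO: "finite (Ob i)" unfolding Ob_def using finS[OF i] by auto
    have finK: "finite (K i)" unfolding K_def by auto
    have cO: "card (Ob i) \<le> card (K i)" unfolding cardK[OF i] Ropt_card[OF i, symmetric] Ob_def
      using finS[OF i] by (intro card_mono) auto
    have "K i \<noteq> {}"
    proof
      assume "K i = {}"
      then have "card (Ob i) = 0" using cO by simp
      then show False using False finO by simp
    qed
    define M where "M = Min (D ` K i)"
    have Mnn: "M \<ge> 0" unfolding M_def using \<open>K i \<noteq> {}\<close> finK Dnn by (auto simp: Min_ge_iff)
    have EM: "E y \<le> M" if "y \<in> Ob i" for y
      unfolding M_def using \<open>K i \<noteq> {}\<close> finK key[OF i that] by (auto simp: Min_ge_iff)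
    have "(\<Sum>y\<in>Ob i. E y) \<le> of_nat (card (Ob i)) * M" using EM by (rule sum_bounded_above)
    also have "\<dots> \<le> of_nat (card (K i)) * M" using cO Mnn by (intro mult_right_mono) auto
    also have "\<dots> \<le> (\<Sum>k\<in>K i. D k)"
      by (rule sum_bounded_below) (use finK in \<open>auto simp: M_def\<close>)
    finally show ?thesis .
  qed
  have finRo: "finite (Ropt - set xs)" using finite_subset[OF _ fin] Ropt_sub by blast
  have "G Ropt \<le> G (set xs \<union> (Ropt - set xs))" by (rule mono) auto
  also have "\<dots> \<le> G (set xs) + (\<Sum>y\<in>Ropt - set xs. E y)"
    unfolding E_def by (rule submod_sum[OF submod finRo])
  also have "(\<Sum>y\<in>Ropt - set xs. E y) \<le> G (set xs)"
    unfolding part2 tele part1 by (rule sum_mono) (rule blockle)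
  finally show ?thesis by simp
qed

theorem theorem3:
  fixes g :: "nat \<Rightarrow> complex^'k" and w :: "nat \<Rightarrow> real"
    and n L :: nat and S :: "nat \<Rightarrow> nat set" and r :: "nat \<Rightarrow> nat"
    and xs :: "nat list" and Topt :: "nat set"
  assumes g_nz: "\<And>i. i < n \<Longrightarrow> g i \<noteq> 0"
    and w_nn: "\<And>i. i < n \<Longrightarrow> w i \<ge> 0"
    and S_nonempty: "\<And>i. i \<in> {1..L} \<Longrightarrow> S i \<noteq> {}"
    and S_disj: "\<And>i j. i \<in> {1..L} \<Longrightarrow> j \<in> {1..L} \<Longrightarrow> i \<noteq> j \<Longrightarrow> S i \<inter> S j = {}"
    and S_cover: "(\<Union>i\<in>{1..L}. S i) = {0..<n}"
    and r_le: "\<And>i. i \<in> {1..L} \<Longrightarrow> r i \<le> card (S i)"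
    and r_nz: "\<exists>i\<in>{1..L}. r i \<noteq> 0"
    and run: "jgs_run (WFC g w {0..<n}) S L r xs"
    and Topt_sub: "Topt \<subseteq> {0..<n}"
    and Topt_card: "\<And>i. i \<in> {1..L} \<Longrightarrow> card (Topt \<inter> S i) = card (S i) - r i"
    and Topt_min: "\<And>T. T \<subseteq> {0..<n} \<Longrightarrow>
                     (\<forall>i\<in>{1..L}. card (T \<inter> S i) = card (S i) - r i) \<Longrightarrow>
                     WFP g w Topt \<le> WFP g w T"
    and Topt_pos: "WFP g w Topt > 0"
  shows "WFP g w ({0..<n} - set xs)
           \<le> 1/2 * (1 + WFP g w {0..<n} / WFP g w Topt) * WFP g w Topt"
proof -
  let ?N = "{0..<n}"
  let ?G = "WFC g w ?N"
  have mono: "?G A \<le> ?G B" if "A \<subseteq> B" for A B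
  proof -
    have "WFP g w (?N - B) \<le> WFP g w (?N - A)"
      by (rule WFP_mono[of "?N - B" "?N - A" n w g]) (use that w_nn in auto)
    then show ?thesis unfolding WFC_def by simp
  qed
  have submod: "?G (insert t B) - ?G B \<le> ?G (insert t A) - ?G A" if "A \<subseteq> B" for A B t
  proof -
    have "?N - insert t B = (?N - B) - {t}" "?N - insert t A = (?N - A) - {t}" by auto
    moreover have "WFP g w (?N - B) - WFP g w ((?N - B) - {t}) \<le> WFP g w (?N - A) - WFP g w ((?N - A) - {t})"
      by (rule WFP_marg[of "?N - B" "?N - A" n w g t]) (use that w_nn in auto)
    ultimately show ?thesis unfolding WFC_def by simp
  qed
  have G0: "?G {} = 0" unfolding WFC_def by simp
  have Rc: "card ((?N - Topt) \<inter> S i) = r i" if i: "i \<in> {1..L}" for i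
  proof -
    have SN: "S i \<subseteq> ?N" using S_cover i by blast
    then have fS: "finite (S i)" using finite_subset[OF SN] by simp
    have "(?N - Topt) \<inter> S i = S i - (Topt \<inter> S i)" using SN by auto
    then have "card ((?N - Topt) \<inter> S i) = card (S i) - card (Topt \<inter> S i)"
      using fS by (simp add: card_Diff_subset)
    then show ?thesis using Topt_card[OF i] r_le[OF i] by simp
  qed
  have gr: "?G (?N - Topt) \<le> 2 * ?G (set xs)"
    by (rule greedy[OF mono submod G0 _ S_disj S_cover run _ Rc]) auto
  have "?N - (?N - Topt) = Topt" using Topt_sub by auto
  then have gr2: "WFP g w ?N - WFP g w Topt \<le> 2 * (WFP g w ?N - WFP g w (?N - set xs))"
    using gr unfolding WFC_def by simp
  have "1/2 * (1 + WFP g w ?N / WFP g w Topt) * WFP g w Topt = (WFP g w Topt + WFP g w ?N) / 2"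
    using Topt_pos by (simp add: field_simps)
  then show ?thesis using gr2 by simp
qed

end
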